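(* Let $(I_t)_{t\in\mathbb{Z}}$ be a stochastic process such that there exists a family $(I_t^n)_{t\in\mathbb{Z}}$, $n\in\mathbb{N}$, of $\{0,1\}$-valued stationary stochastic processes with $P(I_0^n=1)>0$ for all $n$ and $$\mathcal{L}\bigl((I_t^n)_{t\in\{-u,\dots,v\}}\mid I_0^n=1\bigr)\Longrightarrow \mathcal{L}\bigl((I_t)_{t\in\{-u,\dots,v\}}\bigr)\quad (n\to\infty)$$ for all $u,v\in\mathbb{N}$. Define $S^i=\sum_{t\in\mathbb{Z}}I_t$, $S_+^i=\sum_{t=1}^\infty I_t$, $S_-^i=\sum_{t=1}^\infty I_{-t}$, let $S^i_{\pm}$ denote a random variable with the common distribution of $S_+^i$ and $S_-^i$, and let $\theta:=P(S^i_{\pm}=0)=P(I_t=0\ \forall t>0)=P(I_t=0\ \forall t<0)$. Assume $\theta>0$, let $S^t$ be a random variable with law $\mathcal{L}(S^i\mid S_-^i=0)$, and let $\pi_k:=P(S^t=k)$, $k\in\mathbb{N}$. Then $$\pi_k=\theta^{-1}\bigl[P(S^i_{\pm}=k-1)-P(S^i_{\pm}=k)\bigr],\qquad k\in\mathbb{N},$$ and conversely $$P(S^i_{\pm}=\ell)=\theta\,P(S^t\ge \ell+1)=\theta\sum_{i=\ell+1}^\infty \pi_i,\qquad \ell\in\mathbb{N}_0.$$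
   Context: $\mathbb{N}=\{1,2,\dots\}$, $\mathbb{N}_0=\mathbb{N}\cup\{0\}$. $S^t$ is called the typical cluster size and $\theta$ the extremal index. $\mathcal{L}(\cdot\mid\cdot)$ denotes conditional law and $\Longrightarrow$ convergence in distribution. *)

theory Defs
  imports "HOL-Probability.Probability"
begin

definition cnt :: "int set \<Rightarrow> enat" where
  "cnt A = (if finite A then enat (card A) else \<infinity>)"

definition stationary_proc :: "'a measure \<Rightarrow> (int \<Rightarrow> 'a \<Rightarrow> bool) \<Rightarrow> bool" where
  "stationary_proc M X \<longleftrightarrow>
     (\<forall>t. X t \<in> measurable M (count_space UNIV)) \<and>
     (\<forall>h. distr M (PiM UNIV (\<lambda>_::int. count_space UNIV)) (\<lambda>\<omega> t. X (t + h) \<omega>)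
          = distr M (PiM UNIV (\<lambda>_::int. count_space UNIV)) (\<lambda>\<omega> t. X t \<omega>))"

text \<open>The random vector (X_t) for t in {-u..v}, coded as a real vector indexed by int
  (value 1/0 for true/false inside the window, 0 outside).\<close>
definition window :: "nat \<Rightarrow> nat \<Rightarrow> (int \<Rightarrow> 'a \<Rightarrow> bool) \<Rightarrow> 'a \<Rightarrow> (int \<Rightarrow> real)" where
  "window u v X \<omega> = (\<lambda>t. if - int u \<le> t \<and> t \<le> int v then (if X t \<omega> then 1 else 0) else 0)"

definition cond_expect_event :: "'a measure \<Rightarrow> 'a set \<Rightarrow> ('a \<Rightarrow> real) \<Rightarrow> real" where
  "cond_expect_event M A g = (\<integral>\<omega>. g \<omega> * indicator A \<omega> \<partial>M) / measure M A"

text \<open>Convergence in distribution of the finite-dimensional conditional laws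
  L((In_t)_{t=-u..v} | In_0 = 1) to L((I_t)_{t=-u..v}) for all u, v in N = {1,2,...}:
  convergence of expectations of all bounded continuous test functions.\<close>
definition tail_fdd_conv ::
  "(nat \<Rightarrow> 'b measure) \<Rightarrow> (nat \<Rightarrow> int \<Rightarrow> 'b \<Rightarrow> bool) \<Rightarrow> 'a measure \<Rightarrow> (int \<Rightarrow> 'a \<Rightarrow> bool) \<Rightarrow> bool" where
  "tail_fdd_conv Mn In M I \<longleftrightarrow>
     (\<forall>u v. 1 \<le> u \<and> 1 \<le> v \<longrightarrow>
        (\<forall>f :: (int \<Rightarrow> real) \<Rightarrow> real. continuous_on UNIV f \<and> bounded (range f) \<longrightarrow>
           (\<lambda>n. cond_expect_event (Mn n) {\<omega> \<in> space (Mn n). In n 0 \<omega>} (\<lambda>\<omega>. f (window u v (In n) \<omega>)))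
             \<longlonglongrightarrow> (\<integral>\<omega>. f (window u v I \<omega>) \<partial>M)))"

end

theory Submission
  imports Defs
begin

lemma cnt_zero_iff: "cnt A = 0 \<longleftrightarrow> A = {}"
  by (auto simp: cnt_def zero_enat_def card_eq_0_iff)

lemma cnt_Un: "A \<inter> B = {} \<Longrightarrow> cnt (A \<union> B) = cnt A + cnt B"
  by (auto simp: cnt_def card_Un_disjoint)

lemma cnt_insert: "a \<notin> A \<Longrightarrow> cnt (insert a A) = cnt A + 1"
  by (auto simp: cnt_def one_enat_def)

lemma cnt_image: "inj_on f A \<Longrightarrow> cnt (f ` A) = cnt A"
  by (auto simp: cnt_def card_image dest: finite_imageD)

lemma fin_bounded_int: "finite (A::int set) \<Longrightarrow> \<exists>W. \<forall>t\<in>A. \<bar>t\<bar> \<le> W"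
  by (intro exI[of _ "Max (abs ` A)"]) auto

lemma cnt_ge_iff: "enat k \<le> cnt (A::int set) \<longleftrightarrow> (\<exists>W::nat. k \<le> card {t\<in>A. \<bar>t\<bar> \<le> int W})"
proof
  assume h: "enat k \<le> cnt A"
  show "\<exists>W::nat. k \<le> card {t\<in>A. \<bar>t\<bar> \<le> int W}"
  proof (cases "finite A")
    case True
    then obtain W where W: "\<forall>t\<in>A. \<bar>t\<bar> \<le> W"
      using fin_bounded_int by blast
    have "{t\<in>A. \<bar>t\<bar> \<le> int (nat W)} = A" using W by auto
    then show ?thesis using h True by (intro exI[of _ "nat W"]) (simp add: cnt_def)
  next
    case False
    then obtain S where S: "S \<subseteq> A" "card S = k" "finite S"
      by (meson infinite_arbitrarily_large)
    then obtain W where W: "\<forall>t\<in>S. \<bar>t\<bar> \<le> W"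
      using fin_bounded_int by blast
    have "S \<subseteq> {t\<in>A. \<bar>t\<bar> \<le> int (nat W)}" using W S by auto
    moreover have "finite {t\<in>A. \<bar>t\<bar> \<le> int (nat W)}"
      by (rule finite_subset[of _ "{- int (nat W)..int (nat W)}"]) auto
    ultimately show ?thesis using S by (intro exI[of _ "nat W"]) (metis card_mono)
  qed
next
  assume "\<exists>W::nat. k \<le> card {t\<in>A. \<bar>t\<bar> \<le> int W}"
  then obtain W :: nat where W: "k \<le> card {t\<in>A. \<bar>t\<bar> \<le> int W}" by blast
  have fin: "finite {t\<in>A. \<bar>t\<bar> \<le> int W}"
    by (rule finite_subset[of _ "{- int W..int W}"]) auto
  show "enat k \<le> cnt A"
  proof (cases "finite A")
    case True
    then have "card {t\<in>A. \<bar>t\<bar> \<le> int W} \<le> card A" by (intro card_mono) auto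
    then show ?thesis using W True by (simp add: cnt_def)
  qed (simp add: cnt_def)
qed

lemma pred_card_ge:
  assumes X: "\<And>t. X t \<in> measurable N (count_space UNIV)" and F: "finite F"
  shows "{\<omega>\<in>space N. k \<le> card {t\<in>F. X t \<omega>}} \<in> sets N"
proof -
  have eq: "{\<omega>\<in>space N. k \<le> card {t\<in>F. X t \<omega>}} =
     {\<omega>\<in>space N. \<exists>S\<in>{S. S \<subseteq> F \<and> card S = k}. \<forall>t\<in>S. X t \<omega>}"
  proof (intro Collect_cong conj_cong refl iffI)
    fix \<omega> assume "k \<le> card {t\<in>F. X t \<omega>}"
    then obtain S where "S \<subseteq> {t\<in>F. X t \<omega>}" "card S = k" by (meson obtain_subset_with_card_n)
    then show "\<exists>S\<in>{S. S \<subseteq> F \<and> card S = k}. \<forall>t\<in>S. X t \<omega>" by auto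
  next
    fix \<omega> assume "\<exists>S\<in>{S. S \<subseteq> F \<and> card S = k}. \<forall>t\<in>S. X t \<omega>"
    then obtain S where "S \<subseteq> F" "card S = k" "\<forall>t\<in>S. X t \<omega>" by auto
    then have "S \<subseteq> {t\<in>F. X t \<omega>}" by auto
    then show "k \<le> card {t\<in>F. X t \<omega>}" using F \<open>card S = k\<close>
      by (metis (no_types, lifting) card_mono finite_subset mem_Collect_eq subsetI)
  qed
  have fS: "finite {S. S \<subseteq> F \<and> card S = k}" using F by auto
  have "Measurable.pred N (\<lambda>\<omega>. \<exists>S\<in>{S. S \<subseteq> F \<and> card S = k}. \<forall>t\<in>S. X t \<omega>)"
  proof (rule pred_intros_finite(4)[OF fS])
    fix S assume "S \<in> {S. S \<subseteq> F \<and> card S = k}"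
    then have "finite S" using F finite_subset by auto
    then show "Measurable.pred N (\<lambda>\<omega>. \<forall>t\<in>S. X t \<omega>)"
      by (intro pred_intros_finite) (use X in \<open>auto simp: Measurable.pred_def measurable_count_space_eq2\<close>)
  qed
  then show ?thesis unfolding eq Measurable.pred_def by simp
qed

lemma cnt_measurable:
  assumes X: "\<And>t. X t \<in> measurable N (count_space UNIV)"
  shows "(\<lambda>\<omega>. cnt {t. P t \<and> X t \<omega>}) \<in> measurable N (count_space UNIV)"
proof -
  have ge: "{\<omega>\<in>space N. enat k \<le> cnt {t. P t \<and> X t \<omega>}} \<in> sets N" for k
  proof -
    have "{\<omega>\<in>space N. enat k \<le> cnt {t. P t \<and> X t \<omega>}} =
      (\<Union>W::nat. {\<omega>\<in>space N. k \<le> card {t\<in>{t. P t \<and> \<bar>t\<bar> \<le> int W}. X t \<omega>}})"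
      unfolding cnt_ge_iff by (auto simp: conj_commute conj_left_commute)
    also have "\<dots> \<in> sets N"
    proof (rule sets.countable_UN, rule image_subsetI)
      fix W :: nat
      show "{\<omega>\<in>space N. k \<le> card {t\<in>{t. P t \<and> \<bar>t\<bar> \<le> int W}. X t \<omega>}} \<in> sets N"
      proof -
        have "finite {t. P t \<and> \<bar>t\<bar> \<le> int W}"
          by (rule finite_subset[of _ "{- int W..int W}"]) auto
        from pred_card_ge[OF X this, of k] show ?thesis by simp
      qed
    qed
    finally show ?thesis .
  qed
  have "(\<lambda>\<omega>. cnt {t. P t \<and> X t \<omega>}) -` {e} \<inter> space N \<in> sets N" for e
  proof (cases e)
    case (enat k)
    have "(\<lambda>\<omega>. cnt {t. P t \<and> X t \<omega>}) -` {e} \<inter> space N =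
      {\<omega>\<in>space N. enat k \<le> cnt {t. P t \<and> X t \<omega>}} - {\<omega>\<in>space N. enat (Suc k) \<le> cnt {t. P t \<and> X t \<omega>}}"
      using enat by (auto simp: Suc_ile_eq)
    then show ?thesis using ge by auto
  next
    case infinity
    have "(\<lambda>\<omega>. cnt {t. P t \<and> X t \<omega>}) -` {e} \<inter> space N =
      (\<Inter>k. {\<omega>\<in>space N. enat k \<le> cnt {t. P t \<and> X t \<omega>}}) \<inter> space N"
      using infinity by (auto simp: enat_ord_simps) (metis enat_ord_simps(2) lessI not_infinity_eq not_le)
    then show ?thesis using ge by auto
  qed
  then show ?thesis by (auto simp: measurable_count_space_eq2_countable)
qed

definition clip :: "real \<Rightarrow> real" where "clip z = max 0 (min 1 z)"
definition phi :: "bool set \<Rightarrow> real \<Rightarrow> real" where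
  "phi B z = (if False \<in> B then 1 else 0) * (1 - clip z) + (if True \<in> B then 1 else 0) * clip z"
definition cylf :: "(int \<times> bool set) set \<Rightarrow> (int \<Rightarrow> real) \<Rightarrow> real" where
  "cylf Cs y = (\<Prod>c\<in>Cs. phi (snd c) (y (fst c)))"

lemma phi_01: "phi B (if b then 1 else 0) = (if b \<in> B then 1 else 0)"
  by (cases b) (auto simp: phi_def clip_def)

lemma phi_bounds: "0 \<le> phi B z" "phi B z \<le> 1"
  by (auto simp: phi_def clip_def)

lemma cylf_cont: "continuous_on UNIV (cylf Cs)"
  unfolding cylf_def phi_def clip_def
  by (intro continuous_intros continuous_on_product_coordinates[THEN continuous_on_compose2]) auto

lemma cylf_bounded: "bounded (range (cylf Cs))"
proof -
  have "\<bar>cylf Cs y\<bar> \<le> 1" for y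
  proof -
    have "0 \<le> cylf Cs y" unfolding cylf_def by (intro prod_nonneg) (simp add: phi_bounds)
    moreover have "cylf Cs y \<le> 1" unfolding cylf_def by (intro prod_le_1) (simp add: phi_bounds)
    ultimately show ?thesis by simp
  qed
  then show ?thesis unfolding bounded_real by auto
qed

lemma prod_01: "finite Cs \<Longrightarrow> (\<Prod>c\<in>Cs. (if P c then 1 else 0::real)) = (if \<forall>c\<in>Cs. P c then 1 else 0)"
  by (induction Cs rule: finite_induct) auto

lemma cylf_window:
  assumes "finite Cs" "\<forall>c\<in>Cs. - int u \<le> fst c \<and> fst c \<le> int v"
  shows "cylf Cs (window u v X \<omega>) = (if \<forall>c\<in>Cs. X (fst c) \<omega> \<in> snd c then 1 else 0)"
proof -
  have "cylf Cs (window u v X \<omega>) = (\<Prod>c\<in>Cs. (if X (fst c) \<omega> \<in> snd c then 1 else 0))"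
    unfolding cylf_def window_def using assms(2) by (intro prod.cong refl) (auto simp: phi_01)
  then show ?thesis using prod_01[OF assms(1)] by simp
qed

definition cyl :: "'a measure \<Rightarrow> (int \<Rightarrow> 'a \<Rightarrow> bool) \<Rightarrow> (int \<times> bool set) set \<Rightarrow> 'a set" where
  "cyl N X Cs = {\<omega>\<in>space N. \<forall>c\<in>Cs. X (fst c) \<omega> \<in> snd c}"

lemma cyl_sets:
  assumes X: "\<And>t. X t \<in> measurable N (count_space UNIV)" and F: "finite Cs"
  shows "cyl N X Cs \<in> sets N"
proof -
  have "Measurable.pred N (\<lambda>\<omega>. \<forall>c\<in>Cs. X (fst c) \<omega> \<in> snd c)"
    by (rule pred_intros_finite(3)[OF F]) (use X in \<open>auto simp: Measurable.pred_def measurable_count_space_eq2\<close>)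
  then show ?thesis unfolding cyl_def Measurable.pred_def by simp
qed

lemma integral_cyl:
  assumes N: "prob_space N" and X: "\<And>t. X t \<in> measurable N (count_space UNIV)" and F: "finite Cs"
    and A: "A \<in> sets N"
  shows "(\<integral>\<omega>. (if \<forall>c\<in>Cs. X (fst c) \<omega> \<in> snd c then 1 else 0::real) * indicator A \<omega> \<partial>N) = measure N (cyl N X Cs \<inter> A)"
proof -
  interpret prob_space N by fact
  have "(\<integral>\<omega>. (if \<forall>c\<in>Cs. X (fst c) \<omega> \<in> snd c then 1 else 0::real) * indicator A \<omega> \<partial>N)
      = (\<integral>\<omega>. indicator (cyl N X Cs \<inter> A) \<omega> \<partial>N)"
    by (intro Bochner_Integration.integral_cong refl) (auto simp: cyl_def indicator_def)
  also have "\<dots> = measure N (cyl N X Cs \<inter> A)"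
    using cyl_sets[OF X F] A by simp
  finally show ?thesis .
qed

lemma conv_cyl:
  assumes M: "prob_space M" and I_rv: "\<And>t. I t \<in> measurable M (count_space UNIV)"
    and Mn: "\<And>n. prob_space (Mn n)"
    and In_rv: "\<And>n t. In n t \<in> measurable (Mn n) (count_space UNIV)"
    and conv: "tail_fdd_conv Mn In M I"
    and F: "finite Cs"
  shows "(\<lambda>n. measure (Mn n) (cyl (Mn n) (In n) Cs \<inter> {\<omega>\<in>space (Mn n). In n 0 \<omega>})
               / measure (Mn n) {\<omega>\<in>space (Mn n). In n 0 \<omega>}) \<longlonglongrightarrow> measure M (cyl M I Cs)"
proof -
  obtain W where W: "\<forall>t\<in>fst ` Cs. \<bar>t\<bar> \<le> W" using fin_bounded_int[of "fst ` Cs"] F by blast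
  define u where "u = nat W + 1"
  have win: "\<forall>c\<in>Cs. - int u \<le> fst c \<and> fst c \<le> int u" using W unfolding u_def by force
  have u1: "1 \<le> u" unfolding u_def by simp
  have lim: "(\<lambda>n. cond_expect_event (Mn n) {\<omega> \<in> space (Mn n). In n 0 \<omega>} (\<lambda>\<omega>. cylf Cs (window u u (In n) \<omega>)))
             \<longlonglongrightarrow> (\<integral>\<omega>. cylf Cs (window u u I \<omega>) \<partial>M)"
    using conv u1 cylf_cont cylf_bounded unfolding tail_fdd_conv_def by blast
  have A0: "{\<omega> \<in> space (Mn n). In n 0 \<omega>} \<in> sets (Mn n)" for n
    using In_rv[of n 0] unfolding Measurable.pred_def by simp
  have eq1: "cond_expect_event (Mn n) {\<omega> \<in> space (Mn n). In n 0 \<omega>} (\<lambda>\<omega>. cylf Cs (window u u (In n) \<omega>))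
     = measure (Mn n) (cyl (Mn n) (In n) Cs \<inter> {\<omega>\<in>space (Mn n). In n 0 \<omega>})
               / measure (Mn n) {\<omega>\<in>space (Mn n). In n 0 \<omega>}" for n
    unfolding cond_expect_event_def cylf_window[OF F win]
    using integral_cyl[where X="In n", OF Mn In_rv F A0] by simp
  have eq2: "(\<integral>\<omega>. cylf Cs (window u u I \<omega>) \<partial>M) = measure M (cyl M I Cs)"
  proof -
    have "(\<integral>\<omega>. cylf Cs (window u u I \<omega>) \<partial>M) = (\<integral>\<omega>. (if \<forall>c\<in>Cs. I (fst c) \<omega> \<in> snd c then 1 else 0::real) * indicator (space M) \<omega> \<partial>M)"
      unfolding cylf_window[OF F win] by (intro Bochner_Integration.integral_cong) auto
    also have "\<dots> = measure M (cyl M I Cs)"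
      using integral_cyl[where X=I, OF M I_rv F, of "space M"] by (simp add: cyl_def Int_absorb2 Collect_conj_eq)
    finally show ?thesis .
  qed
  show ?thesis using lim unfolding eq1 eq2 .
qed

abbreviation Om :: "(int \<Rightarrow> bool) measure" where
  "Om \<equiv> PiM UNIV (\<lambda>_::int. count_space (UNIV::bool set))"

lemma space_Om: "space Om = UNIV"
  by (auto simp: space_PiM PiE_def extensional_def)

lemma path_meas:
  assumes "\<And>t. X t \<in> measurable N (count_space UNIV)"
  shows "(\<lambda>\<omega> t. X (g t) \<omega>) \<in> measurable N Om"
  by (rule measurable_PiM_single') (use assms in auto)

lemma coord_meas: "(\<lambda>x::int\<Rightarrow>bool. x t) \<in> measurable Om (count_space UNIV)"
  by (rule measurable_component_singleton) simp

lemma tc_cyl: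
  assumes M: "prob_space M" and I_rv: "\<And>t. I t \<in> measurable M (count_space UNIV)"
    and Mn: "\<And>n. prob_space (Mn n)"
    and stat: "\<And>n. stationary_proc (Mn n) (In n)"
    and conv: "tail_fdd_conv Mn In M I"
    and F: "finite Cs"
  shows "measure M (cyl M I (insert (s,{True}) Cs))
       = measure M (cyl M I (insert (-s,{True}) ((\<lambda>c. (fst c - s, snd c)) ` Cs)))"
proof -
  have In_rv: "\<And>n t. In n t \<in> measurable (Mn n) (count_space UNIV)"
    using stat unfolding stationary_proc_def by blast
  define Cs1 where "Cs1 = insert (s,{True}) Cs"
  define Cs2 where "Cs2 = insert (-s,{True}) ((\<lambda>c. (fst c - s, snd c)) ` Cs)"
  define A0 where "A0 n = {\<omega>\<in>space (Mn n). In n 0 \<omega>}" for n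
  have eq: "measure (Mn n) (cyl (Mn n) (In n) Cs1 \<inter> A0 n) = measure (Mn n) (cyl (Mn n) (In n) Cs2 \<inter> A0 n)" for n
  proof -
    define D where "D = cyl Om (\<lambda>t x. x t) (insert (0,{True}) Cs2)"
    have D: "D \<in> sets Om" unfolding D_def Cs2_def using F by (intro cyl_sets coord_meas) auto
    have "distr (Mn n) Om (\<lambda>\<omega> t. In n (t + s) \<omega>) = distr (Mn n) Om (\<lambda>\<omega> t. In n t \<omega>)"
      using stat[of n] unfolding stationary_proc_def by blast
    then have "emeasure (distr (Mn n) Om (\<lambda>\<omega> t. In n (t + s) \<omega>)) D = emeasure (distr (Mn n) Om (\<lambda>\<omega> t. In n t \<omega>)) D"
      by simp
    then have "emeasure (Mn n) ((\<lambda>\<omega> t. In n (t + s) \<omega>) -` D \<inter> space (Mn n))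
             = emeasure (Mn n) ((\<lambda>\<omega> t. In n t \<omega>) -` D \<inter> space (Mn n))"
      using D path_meas[OF In_rv, of n "\<lambda>t. t + s"] path_meas[OF In_rv, of n "\<lambda>t. t"]
      by (simp add: emeasure_distr)
    moreover have "(\<lambda>\<omega> t. In n (t + s) \<omega>) -` D \<inter> space (Mn n) = cyl (Mn n) (In n) Cs1 \<inter> A0 n"
      unfolding D_def Cs1_def Cs2_def A0_def cyl_def by (auto simp: space_Om)
    moreover have "(\<lambda>\<omega> t. In n t \<omega>) -` D \<inter> space (Mn n) = cyl (Mn n) (In n) Cs2 \<inter> A0 n"
      unfolding D_def Cs1_def Cs2_def A0_def cyl_def by (auto simp: space_Om)
    ultimately show ?thesis by (simp add: measure_def)
  qed
  have l1: "(\<lambda>n. measure (Mn n) (cyl (Mn n) (In n) Cs1 \<inter> A0 n) / measure (Mn n) (A0 n)) \<longlonglongrightarrow> measure M (cyl M I Cs1)"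
    unfolding A0_def by (rule conv_cyl[OF M I_rv Mn In_rv conv]) (simp add: Cs1_def F)
  have l2: "(\<lambda>n. measure (Mn n) (cyl (Mn n) (In n) Cs2 \<inter> A0 n) / measure (Mn n) (A0 n)) \<longlonglongrightarrow> measure M (cyl M I Cs2)"
    unfolding A0_def by (rule conv_cyl[OF M I_rv Mn In_rv conv]) (simp add: Cs2_def F)
  show ?thesis using LIMSEQ_unique[OF l1 l2[folded eq]] unfolding Cs1_def Cs2_def .
qed

definition tc :: "'a measure \<Rightarrow> (int \<Rightarrow> 'a \<Rightarrow> bool) \<Rightarrow> bool" where
  "tc M I \<longleftrightarrow> (\<forall>s. \<forall>C\<in>sets Om. measure M {\<omega>\<in>space M. I s \<omega> \<and> (\<lambda>t. I t \<omega>) \<in> C}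
      = measure M {\<omega>\<in>space M. I (-s) \<omega> \<and> (\<lambda>t. I (t - s) \<omega>) \<in> C})"

lemma emeasure_dd:
  assumes I_rv: "\<And>t. I t \<in> measurable M (count_space UNIV)" and C: "C \<in> sets Om"
  shows "emeasure (distr (density M (indicator {\<omega>\<in>space M. I s \<omega>})) Om (\<lambda>\<omega> t. I (g t) \<omega>)) C
       = emeasure M {\<omega>\<in>space M. I s \<omega> \<and> (\<lambda>t. I (g t) \<omega>) \<in> C}"
proof -
  have A: "{\<omega>\<in>space M. I s \<omega>} \<in> sets M" using I_rv[of s] unfolding Measurable.pred_def by simp
  have m: "(\<lambda>\<omega> t. I (g t) \<omega>) \<in> measurable M Om" by (rule path_meas[OF I_rv])
  have "emeasure (distr (density M (indicator {\<omega>\<in>space M. I s \<omega>})) Om (\<lambda>\<omega> t. I (g t) \<omega>)) C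
      = emeasure (density M (indicator {\<omega>\<in>space M. I s \<omega>})) ((\<lambda>\<omega> t. I (g t) \<omega>) -` C \<inter> space M)"
    using m C by (subst emeasure_distr) auto
  also have "\<dots> = emeasure M ({\<omega>\<in>space M. I s \<omega>} \<inter> ((\<lambda>\<omega> t. I (g t) \<omega>) -` C \<inter> space M))"
    using m C A by (intro emeasure_restricted) auto
  also have "{\<omega>\<in>space M. I s \<omega>} \<inter> ((\<lambda>\<omega> t. I (g t) \<omega>) -` C \<inter> space M) = {\<omega>\<in>space M. I s \<omega> \<and> (\<lambda>t. I (g t) \<omega>) \<in> C}"
    by auto
  finally show ?thesis .
qed

lemma tc_ext:
  assumes M: "prob_space M" and I_rv: "\<And>t. I t \<in> measurable M (count_space UNIV)"
    and cy: "\<And>s Cs. finite Cs \<Longrightarrow> measure M (cyl M I (insert (s,{True}) Cs))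
       = measure M (cyl M I (insert (-s,{True}) ((\<lambda>c. (fst c - s, snd c)) ` Cs)))"
  shows "tc M I"
  unfolding tc_def
proof (intro allI ballI)
  interpret prob_space M by fact
  fix s :: int and C assume C: "C \<in> sets Om"
  define mu where "mu = distr (density M (indicator {\<omega>\<in>space M. I s \<omega>})) Om (\<lambda>\<omega> t. I t \<omega>)"
  define nu where "nu = distr (density M (indicator {\<omega>\<in>space M. I (-s) \<omega>})) Om (\<lambda>\<omega> t. I (t - s) \<omega>)"
  have mu: "emeasure mu C = emeasure M {\<omega>\<in>space M. I s \<omega> \<and> (\<lambda>t. I t \<omega>) \<in> C}" if "C \<in> sets Om" for C
    unfolding mu_def using emeasure_dd[where I=I and M=M and s=s and g="\<lambda>t. t", OF I_rv that] by simp
  have nu: "emeasure nu C = emeasure M {\<omega>\<in>space M. I (-s) \<omega> \<and> (\<lambda>t. I (t - s) \<omega>) \<in> C}" if "C \<in> sets Om" for C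
    unfolding nu_def using emeasure_dd[where I=I and M=M and s="-s" and g="\<lambda>t. t - s", OF I_rv that] by simp
  have "mu = nu"
  proof (rule measure_eqI_PiM_infinite)
    show "sets mu = sets Om" "sets nu = sets Om" unfolding mu_def nu_def by auto
    show "finite_measure mu"
    proof
      have "emeasure mu (space mu) = emeasure mu (space Om)" unfolding mu_def by simp
      also have "\<dots> \<noteq> \<infinity>" by (subst mu) (auto simp: emeasure_eq_measure)
      finally show "emeasure mu (space mu) \<noteq> \<infinity>" .
    qed
    fix A :: "int \<Rightarrow> bool set" and J :: "int set" assume J: "finite J" "J \<subseteq> UNIV" and A: "\<And>i. i \<in> J \<Longrightarrow> A i \<in> sets (count_space UNIV)"
    define Cs where "Cs = (\<lambda>j. (j, A j)) ` J"
    have fin: "finite Cs" unfolding Cs_def using J by simp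
    have P: "prod_emb UNIV (\<lambda>_. count_space UNIV) J (Pi\<^sub>E J A) = {x. \<forall>j\<in>J. x j \<in> A j}"
      by (auto simp: prod_emb_def PiE_def extensional_def Pi_def)
    have Ps: "prod_emb UNIV (\<lambda>_. count_space UNIV) J (Pi\<^sub>E J A) \<in> sets Om"
    proof -
      have "{x. \<forall>j\<in>J. x j \<in> A j} = cyl Om (\<lambda>t x. x t) Cs" by (auto simp: cyl_def Cs_def space_Om)
      then show ?thesis unfolding P using cyl_sets[OF coord_meas fin] by simp
    qed
    have e1: "{\<omega>\<in>space M. I s \<omega> \<and> (\<lambda>t. I t \<omega>) \<in> {x. \<forall>j\<in>J. x j \<in> A j}} = cyl M I (insert (s,{True}) Cs)"
      unfolding cyl_def Cs_def by auto
    have e2: "{\<omega>\<in>space M. I (-s) \<omega> \<and> (\<lambda>t. I (t - s) \<omega>) \<in> {x. \<forall>j\<in>J. x j \<in> A j}}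
        = cyl M I (insert (-s,{True}) ((\<lambda>c. (fst c - s, snd c)) ` Cs))"
      unfolding cyl_def Cs_def by auto
    show "emeasure mu (prod_emb UNIV (\<lambda>_. count_space UNIV) J (Pi\<^sub>E J A))
        = emeasure nu (prod_emb UNIV (\<lambda>_. count_space UNIV) J (Pi\<^sub>E J A))"
      unfolding mu[OF Ps] nu[OF Ps] unfolding P e1 e2
      using cy[OF fin, of s] by (simp add: emeasure_eq_measure)
  qed
  then have "emeasure mu C = emeasure nu C" by simp
  then show "measure M {\<omega>\<in>space M. I s \<omega> \<and> (\<lambda>t. I t \<omega>) \<in> C}
      = measure M {\<omega>\<in>space M. I (-s) \<omega> \<and> (\<lambda>t. I (t - s) \<omega>) \<in> C}"
    unfolding mu[OF C] nu[OF C] by (simp add: emeasure_eq_measure)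
qed

lemma cnt_mono: "A \<subseteq> B \<Longrightarrow> cnt A \<le> cnt B"
  by (auto simp: cnt_def card_mono dest: finite_subset)

lemma cnt_shift: "cnt {t. P t \<and> x (t - m)} = cnt {t. P (t + m) \<and> x (t::int)}"
proof -
  have "{t. P t \<and> x (t - m)} = (\<lambda>t. t + m) ` {t. P (t + m) \<and> x t}"
    by (auto simp: image_iff intro!: exI[of _ "_ - m"])
  then show ?thesis by (simp add: cnt_image inj_on_def)
qed

lemma kth_nat:
  "(infinite (B::nat set) \<or> Suc r \<le> card B) \<Longrightarrow> \<exists>m\<in>B. card {t\<in>B. t < m} = r"
proof (induction r arbitrary: B)
  case 0
  then have "B \<noteq> {}" by auto
  then obtain b where "b \<in> B" by auto
  then have "(LEAST t. t \<in> B) \<in> B" by (rule LeastI)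
  moreover have "{t\<in>B. t < (LEAST t. t \<in> B)} = {}" using not_less_Least by auto
  ultimately show ?case by auto
next
  case (Suc r)
  then have "B \<noteq> {}" by auto
  then obtain b where "b \<in> B" by auto
  define m0 where "m0 = (LEAST t. t \<in> B)"
  have m0: "m0 \<in> B" unfolding m0_def using \<open>b \<in> B\<close> by (rule LeastI)
  have m0l: "\<And>t. t \<in> B \<Longrightarrow> m0 \<le> t" unfolding m0_def by (rule Least_le)
  have "infinite (B - {m0}) \<or> Suc r \<le> card (B - {m0})"
    using Suc.prems m0 by (auto simp: card_Diff_singleton)
  from Suc.IH[OF this] obtain m where m: "m \<in> B - {m0}" "card {t\<in>B - {m0}. t < m} = r" by blast
  have "m0 < m" using m m0l[of m] by auto
  then have "{t\<in>B. t < m} = insert m0 {t\<in>B - {m0}. t < m}" using m0 by auto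
  moreover have "finite {t\<in>B - {m0}. t < m}" by (rule finite_subset[of _ "{..<m}"]) auto
  ultimately have "card {t\<in>B. t < m} = Suc r" using m by simp
  then show ?case using m by auto
qed

lemma kth_int:
  assumes A: "A \<subseteq> {0::int..}" and c: "enat (Suc r) \<le> cnt A"
  shows "\<exists>m\<in>A. cnt {t\<in>A. t < m} = enat r"
proof -
  define B where "B = nat ` A"
  have AB: "A = int ` B" unfolding B_def using A by (force simp: image_iff)
  have injA: "inj_on int B" by simp
  have "finite A \<longleftrightarrow> finite B" unfolding AB using injA finite_image_iff by blast
  moreover have "card A = card B" unfolding AB using injA by (rule card_image)
  ultimately have "infinite B \<or> Suc r \<le> card B" using c by (auto simp: cnt_def split: if_splits)
  from kth_nat[OF this] obtain m where m: "m \<in> B" "card {t\<in>B. t < m} = r" by blast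
  have "{t\<in>A. t < int m} = int ` {t\<in>B. t < m}" unfolding AB by auto
  moreover have "finite {t\<in>B. t < m}" by (rule finite_subset[of _ "{..<m}"]) auto
  ultimately have "cnt {t\<in>A. t < int m} = enat r" using m by (simp add: cnt_def card_image)
  then show ?thesis using m AB by auto
qed

lemma enat_add1_cancel: "(a::enat) + 1 = b + 1 \<Longrightarrow> a = b"
  by (cases a; cases b) (auto simp: one_enat_def)

lemma enat_addl_cancel: "enat r + (a::enat) = enat r + b \<Longrightarrow> a = b"
  by (cases a; cases b) auto

lemma ev_sets:
  assumes I_rv: "\<And>t. I t \<in> measurable M (count_space UNIV)" and C: "C \<in> sets Om"
  shows "{\<omega>\<in>space M. I s \<omega> \<and> (\<lambda>t. I (g t) \<omega>) \<in> C} \<in> sets M"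
proof -
  have A: "{\<omega>\<in>space M. I s \<omega>} \<in> sets M" using I_rv[of s] unfolding Measurable.pred_def by simp
  have "(\<lambda>\<omega> t. I (g t) \<omega>) -` C \<inter> space M \<in> sets M" using path_meas[OF I_rv] C by (rule measurable_sets)
  with A have "{\<omega>\<in>space M. I s \<omega>} \<inter> ((\<lambda>\<omega> t. I (g t) \<omega>) -` C \<inter> space M) \<in> sets M" by auto
  also have "{\<omega>\<in>space M. I s \<omega>} \<inter> ((\<lambda>\<omega> t. I (g t) \<omega>) -` C \<inter> space M) = {\<omega>\<in>space M. I s \<omega> \<and> (\<lambda>t. I (g t) \<omega>) \<in> C}"
    by auto
  finally show ?thesis .
qed

lemma cnt_eq_sets:
  assumes "\<And>t. X t \<in> measurable N (count_space UNIV)"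
  shows "{\<omega>\<in>space N. cnt {t. P t \<and> X t \<omega>} = e} \<in> sets N"
proof -
  have "(\<lambda>\<omega>. cnt {t. P t \<and> X t \<omega>}) -` {e} \<inter> space N \<in> sets N"
    using cnt_measurable[OF assms] by (rule measurable_sets) simp
  also have "(\<lambda>\<omega>. cnt {t. P t \<and> X t \<omega>}) -` {e} \<inter> space N = {\<omega>\<in>space N. cnt {t. P t \<and> X t \<omega>} = e}" by auto
  finally show ?thesis .
qed

lemma pt_sets:
  assumes "\<And>t. X t \<in> measurable N (count_space UNIV)"
  shows "{\<omega>\<in>space N. X s \<omega>} \<in> sets N"
  using assms[of s] unfolding Measurable.pred_def by simp

lemma cnt_split: "X = Y \<union> Z \<Longrightarrow> Y \<inter> Z = {} \<Longrightarrow> cnt X = cnt Y + cnt Z"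
  using cnt_Un by simp

lemma cnt_split2: "insert a X = Y \<union> insert b Z \<Longrightarrow> a \<notin> X \<Longrightarrow> b \<notin> Z \<Longrightarrow> Y \<inter> insert b Z = {}
   \<Longrightarrow> cnt X + 1 = cnt Y + (cnt Z + 1)"
  by (metis cnt_Un cnt_insert)

lemma tcD: "tc M I \<Longrightarrow> C \<in> sets Om \<Longrightarrow> measure M {\<omega>\<in>space M. I s \<omega> \<and> (\<lambda>t. I t \<omega>) \<in> C}
      = measure M {\<omega>\<in>space M. I (-s) \<omega> \<and> (\<lambda>t. I (t - s) \<omega>) \<in> C}"
  unfolding tc_def by blast

lemma anchor:
  assumes M: "prob_space M" and I_rv: "\<And>t. I t \<in> measurable M (count_space UNIV)" and TC: "tc M I"
  shows "measure M {\<omega>\<in>space M. I 0 \<omega> \<and> cnt {t. t < 0 \<and> I t \<omega>} = enat r \<and> cnt {t. t > 0 \<and> I t \<omega>} = q}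
       = measure M {\<omega>\<in>space M. I 0 \<omega> \<and> cnt {t. t < 0 \<and> I t \<omega>} = 0 \<and> cnt {t. t > 0 \<and> I t \<omega>} = q + enat r}"
    (is "measure M ?E = measure M ?F")
proof -
  interpret prob_space M by fact
  define C where "C m = {y::int\<Rightarrow>bool. y 0 \<and> y (int m) \<and> cnt {t. t < int m \<and> y t} = enat r
      \<and> cnt {t. t > int m \<and> y t} = q \<and> cnt {t. t < 0 \<and> y t} = 0}" for m :: nat
  have Cs: "C m \<in> sets Om" for m
  proof -
    have "C m = {y\<in>space Om. y 0} \<inter> {y\<in>space Om. y (int m)} \<inter> {y\<in>space Om. cnt {t. t < int m \<and> y t} = enat r}
       \<inter> {y\<in>space Om. cnt {t. t > int m \<and> y t} = q} \<inter> {y\<in>space Om. cnt {t. t < 0 \<and> y t} = 0}"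
      unfolding C_def by (auto simp: space_Om)
    also have "\<dots> \<in> sets Om"
      by (intro sets.Int pt_sets[OF coord_meas] cnt_eq_sets[OF coord_meas])
    finally show ?thesis .
  qed
  define L where "L m = {\<omega>\<in>space M. I (- int m) \<omega> \<and> (\<lambda>t. I (t - int m) \<omega>) \<in> C m}" for m
  define R where "R m = {\<omega>\<in>space M. I (int m) \<omega> \<and> (\<lambda>t. I t \<omega>) \<in> C m}" for m
  have LR: "measure M (L m) = measure M (R m)" for m
    unfolding L_def R_def using tcD[OF TC Cs[of m], of "int m"] by simp
  have Ls: "L m \<in> sets M" for m unfolding L_def by (rule ev_sets[OF I_rv Cs])
  have Rs: "R m \<in> sets M" for m unfolding R_def using ev_sets[where s="int m" and g="\<lambda>t. t", OF I_rv Cs] by simp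
  have sh1: "cnt {t. t < int m \<and> I (t - int m) \<omega>} = cnt {t. t < 0 \<and> I t \<omega>}" for m \<omega>
    using cnt_shift[of "\<lambda>t. t < int m" "\<lambda>t. I t \<omega>" "int m"] by simp
  have sh2: "cnt {t. int m < t \<and> I (t - int m) \<omega>} = cnt {t. 0 < t \<and> I t \<omega>}" for m \<omega>
    using cnt_shift[of "\<lambda>t. int m < t" "\<lambda>t. I t \<omega>" "int m"] by simp
  have sh3: "cnt {t. t < 0 \<and> I (t - int m) \<omega>} = cnt {t. t < - int m \<and> I t \<omega>}" for m \<omega>
    using cnt_shift[of "\<lambda>t. t < 0" "\<lambda>t. I t \<omega>" "int m"] by (simp add: less_diff_eq[symmetric])
  have Lc: "L m = {\<omega>\<in>space M. I 0 \<omega> \<and> cnt {t. t < 0 \<and> I t \<omega>} = enat r \<and> cnt {t. t > 0 \<and> I t \<omega>} = q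
      \<and> I (- int m) \<omega> \<and> cnt {t. t < - int m \<and> I t \<omega>} = 0}" for m
    unfolding L_def C_def by (auto simp: sh1 sh2 sh3)
  have Rc: "R m = {\<omega>\<in>space M. I 0 \<omega> \<and> I (int m) \<omega> \<and> cnt {t. t < int m \<and> I t \<omega>} = enat r
      \<and> cnt {t. t > int m \<and> I t \<omega>} = q \<and> cnt {t. t < 0 \<and> I t \<omega>} = 0}" for m
    unfolding R_def C_def by auto
  have Ld: "disjoint_family L"
    unfolding disjoint_family_on_def
  proof (intro ballI impI)
    fix m1 m2 :: nat assume "m1 \<noteq> m2"
    show "L m1 \<inter> L m2 = {}"
    proof (rule ccontr)
      assume "L m1 \<inter> L m2 \<noteq> {}"
      then obtain \<omega> where w: "\<omega> \<in> L m1" "\<omega> \<in> L m2" by auto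
      have "m1 < m2 \<or> m2 < m1" using \<open>m1 \<noteq> m2\<close> by arith
      then show False
      proof
        assume "m1 < m2"
        then have "- int m2 \<in> {t. t < - int m1 \<and> I t \<omega>}" using w unfolding Lc by auto
        then show False using w unfolding Lc by (auto simp: cnt_zero_iff)
      next
        assume "m2 < m1"
        then have "- int m1 \<in> {t. t < - int m2 \<and> I t \<omega>}" using w unfolding Lc by auto
        then show False using w unfolding Lc by (auto simp: cnt_zero_iff)
      qed
    qed
  qed
  have Rd: "disjoint_family R"
  proof -
    have *: False if "\<omega> \<in> R m1" "\<omega> \<in> R m2" "m1 < m2" for \<omega> m1 m2
    proof -
      have "insert (int m1) {t. t < int m1 \<and> I t \<omega>} \<subseteq> {t. t < int m2 \<and> I t \<omega>}"
        using that unfolding Rc by auto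
      then have "cnt (insert (int m1) {t. t < int m1 \<and> I t \<omega>}) \<le> cnt {t. t < int m2 \<and> I t \<omega>}"
        by (rule cnt_mono)
      then have "enat r + 1 \<le> enat r" using that unfolding Rc by (simp add: cnt_insert)
      then show False by (simp add: one_enat_def)
    qed
    show ?thesis unfolding disjoint_family_on_def
      by (metis disjoint_iff_not_equal * linorder_neqE_nat)
  qed
  have LU: "(\<Union>m. L m) = ?E"
  proof
    show "(\<Union>m. L m) \<subseteq> ?E" unfolding Lc by auto
  next
    show "?E \<subseteq> (\<Union>m. L m)"
    proof
      fix \<omega> assume w: "\<omega> \<in> ?E"
      define S where "S = {t. t \<le> 0 \<and> I t \<omega>}"
      have "S = insert 0 {t. t < 0 \<and> I t \<omega>}" unfolding S_def using w by auto
      moreover have "finite {t. t < 0 \<and> I t \<omega>}" using w by (auto simp: cnt_def split: if_splits)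
      ultimately have Sf: "finite S" "S \<noteq> {}" by auto
      define a where "a = Min S"
      have aS: "a \<in> S" unfolding a_def using Sf by simp
      have amin: "\<And>t. t \<in> S \<Longrightarrow> a \<le> t" unfolding a_def using Sf by simp
      define m where "m = nat (- a)"
      have am: "- int m = a" using aS unfolding m_def S_def by auto
      have "{t. t < - int m \<and> I t \<omega>} = {}" using amin unfolding am S_def
        by (auto) (metis less_le_not_le order.trans aS S_def mem_Collect_eq linorder_not_le)
      then have "\<omega> \<in> L m" unfolding Lc using w aS am unfolding S_def by (auto simp: cnt_zero_iff)
      then show "\<omega> \<in> (\<Union>m. L m)" by auto
    qed
  qed
  have RU: "(\<Union>m. R m) = ?F"
  proof
    show "(\<Union>m. R m) \<subseteq> ?F"
    proof
      fix \<omega> assume "\<omega> \<in> (\<Union>m. R m)"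
      then obtain m where w: "\<omega> \<in> R m" by auto
      define K where "K = cnt {t. 0 \<le> t \<and> t < int m \<and> I t \<omega>}"
      have "cnt {t. t < int m \<and> I t \<omega>} = cnt {t. t < 0 \<and> I t \<omega>} + K"
        unfolding K_def by (rule cnt_split) auto
      moreover have h: "cnt {t. t < int m \<and> I t \<omega>} = enat r" "cnt {t. t < 0 \<and> I t \<omega>} = 0"
        using w unfolding Rc by auto
      ultimately have Kr: "K = enat r" by simp
      have "cnt {t. t > 0 \<and> I t \<omega>} + 1 = K + (cnt {t. t > int m \<and> I t \<omega>} + 1)"
        unfolding K_def using w unfolding Rc by (intro cnt_split2[where a=0 and b="int m"]) auto
      then have "cnt {t. t > 0 \<and> I t \<omega>} + 1 = (q + enat r) + 1" using w Kr unfolding Rc by (simp add: ac_simps)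
      then have "cnt {t. t > 0 \<and> I t \<omega>} = q + enat r" by (rule enat_add1_cancel)
      then show "\<omega> \<in> ?F" using w unfolding Rc by auto
    qed
  next
    show "?F \<subseteq> (\<Union>m. R m)"
    proof
      fix \<omega> assume w: "\<omega> \<in> ?F"
      define A where "A = {t. 0 \<le> t \<and> I t \<omega>}"
      have "A = insert 0 {t. t > 0 \<and> I t \<omega>}" unfolding A_def using w by auto
      then have "cnt A = q + enat r + 1" using w by (simp add: cnt_insert)
      then have "enat (Suc r) \<le> cnt A"
        by (cases q) (auto simp: one_enat_def)
      from kth_int[OF _ this] obtain m where m: "m \<in> A" "cnt {t\<in>A. t < m} = enat r"
        unfolding A_def by auto
      define n where "n = nat m"
      have nm: "int n = m" using m(1) unfolding n_def A_def by auto
      define K where "K = cnt {t. 0 \<le> t \<and> t < int n \<and> I t \<omega>}"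
      have Kr: "K = enat r" using m(2) unfolding K_def A_def nm by (simp add: conj_commute conj_left_commute)
      have "cnt {t. t < int n \<and> I t \<omega>} = cnt {t. t < 0 \<and> I t \<omega>} + K"
        unfolding K_def by (rule cnt_split) auto
      then have c1: "cnt {t. t < int n \<and> I t \<omega>} = enat r"
        using w Kr by simp
      have "cnt {t. t > 0 \<and> I t \<omega>} + 1 = K + (cnt {t. t > int n \<and> I t \<omega>} + 1)"
        unfolding K_def using w m(1) nm unfolding A_def by (intro cnt_split2[where a=0 and b="int n"]) auto
      then have "enat r + (q + 1) = enat r + (cnt {t. t > int n \<and> I t \<omega>} + 1)"
        using w Kr by (simp add: ac_simps)
      then have "q + 1 = cnt {t. t > int n \<and> I t \<omega>} + 1" by (rule enat_addl_cancel)
      then have c2: "cnt {t. t > int n \<and> I t \<omega>} = q" by (metis enat_add1_cancel)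
      have "\<omega> \<in> R n" unfolding Rc using w c1 c2 m(1) nm unfolding A_def by auto
      then show "\<omega> \<in> (\<Union>m. R m)" by auto
    qed
  qed
  have sL: "(\<lambda>m. measure M (L m)) sums measure M ?E"
    unfolding LU[symmetric] by (rule measure_UNION) (use Ls Ld in \<open>auto simp: emeasure_eq_measure\<close>)
  have sR: "(\<lambda>m. measure M (R m)) sums measure M ?F"
    unfolding RU[symmetric] by (rule measure_UNION) (use Rs Rd in \<open>auto simp: emeasure_eq_measure\<close>)
  show ?thesis using sums_unique2[OF sL sR[folded LR]] .
qed

lemma tc_reflect:
  assumes M: "prob_space M" and I_rv: "\<And>t. I t \<in> measurable M (count_space UNIV)" and TC: "tc M I"
  shows "tc M (\<lambda>t. I (- t))"
  unfolding tc_def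
proof (intro allI ballI)
  fix s :: int and C assume C: "C \<in> sets Om"
  define D where "D = (\<lambda>x t. x (- t)) -` C \<inter> space Om"
  have Rm: "(\<lambda>(x::int\<Rightarrow>bool) t. x (- t)) \<in> measurable Om Om"
    using path_meas[where X="\<lambda>t x. x t" and g="\<lambda>t. - t", OF coord_meas] by simp
  have D: "D \<in> sets Om" unfolding D_def using Rm C by (rule measurable_sets)
  have "measure M {\<omega>\<in>space M. I (- s) \<omega> \<and> (\<lambda>t. I (- t) \<omega>) \<in> C}
      = measure M {\<omega>\<in>space M. I (- s) \<omega> \<and> (\<lambda>t. I t \<omega>) \<in> D}"
    unfolding D_def by (simp add: space_Om)
  also have "\<dots> = measure M {\<omega>\<in>space M. I (- (- s)) \<omega> \<and> (\<lambda>t. I (t - (- s)) \<omega>) \<in> D}"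
    by (rule tcD[OF TC D])
  also have "\<dots> = measure M {\<omega>\<in>space M. I s \<omega> \<and> (\<lambda>t. I (- (t - s)) \<omega>) \<in> C}"
    unfolding D_def by (simp add: space_Om algebra_simps)
  finally show "measure M {\<omega>\<in>space M. I (- s) \<omega> \<and> (\<lambda>t. I (- t) \<omega>) \<in> C}
      = measure M {\<omega>\<in>space M. I (- (- s)) \<omega> \<and> (\<lambda>t. I (- (t - s)) \<omega>) \<in> C}" by simp
qed

lemma cnt_neg: "cnt {t. P t \<and> x (- t)} = cnt {t. P (- t) \<and> x (t::int)}"
proof -
  have "{t. P t \<and> x (- t)} = uminus ` {t. P (- t) \<and> x t}" by (auto simp: image_iff intro!: exI[of _ "- _"])
  then show ?thesis by (simp add: cnt_image)
qed

lemma as_I0: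
  assumes M: "prob_space M" and A: "A \<in> sets M" and A1: "measure M A = 1" and X: "X \<in> sets M"
  shows "measure M X = measure M (X \<inter> A)"
proof -
  interpret prob_space M by fact
  have "measure M (X - A) \<le> measure M (space M - A)" using X A by (intro finite_measure_mono) (auto dest: sets.sets_into_space)
  also have "\<dots> = 0" using A A1 by (simp add: prob_compl)
  finally have "measure M (X - A) = 0" by (simp add: measure_le_0_iff)
  moreover have "measure M X = measure M (X \<inter> A) + measure M (X - A)"
    using X A by (simp add: finite_measure_Diff' finite_measure_Union'[symmetric] Un_Diff_Int)
  ultimately show ?thesis by simp
qed

lemma part_sums:
  assumes M: "prob_space M" and Q: "{\<omega>\<in>space M. Q \<omega>} \<in> sets M"
    and g: "\<And>e. {\<omega>\<in>space M. g \<omega> = e} \<in> sets M"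
  shows "(\<lambda>r. measure M {\<omega>\<in>space M. Q \<omega> \<and> g \<omega> = enat r}) sums
          (measure M {\<omega>\<in>space M. Q \<omega>} - measure M {\<omega>\<in>space M. Q \<omega> \<and> g \<omega> = \<infinity>})"
proof -
  interpret prob_space M by fact
  define B where "B r = {\<omega>\<in>space M. Q \<omega> \<and> g \<omega> = enat r}" for r
  have Bs: "B r \<in> sets M" for r
  proof -
    have "B r = {\<omega>\<in>space M. Q \<omega>} \<inter> {\<omega>\<in>space M. g \<omega> = enat r}" unfolding B_def by auto
    then show ?thesis using Q g by auto
  qed
  have Is: "{\<omega>\<in>space M. Q \<omega> \<and> g \<omega> = \<infinity>} \<in> sets M"
  proof -
    have "{\<omega>\<in>space M. Q \<omega> \<and> g \<omega> = \<infinity>} = {\<omega>\<in>space M. Q \<omega>} \<inter> {\<omega>\<in>space M. g \<omega> = \<infinity>}" by auto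
    then show ?thesis using Q g by auto
  qed
  have d: "disjoint_family B" unfolding disjoint_family_on_def B_def by auto
  have s: "(\<lambda>r. measure M (B r)) sums measure M (\<Union>r. B r)"
    by (rule measure_UNION) (use Bs d in \<open>auto simp: emeasure_eq_measure\<close>)
  have "{\<omega>\<in>space M. Q \<omega>} = (\<Union>r. B r) \<union> {\<omega>\<in>space M. Q \<omega> \<and> g \<omega> = \<infinity>}"
    unfolding B_def by (auto)
  then have "measure M {\<omega>\<in>space M. Q \<omega>} = measure M (\<Union>r. B r) + measure M {\<omega>\<in>space M. Q \<omega> \<and> g \<omega> = \<infinity>}"
    using Bs Is by (simp add: finite_measure_Union) (rule finite_measure_Union, auto simp: B_def)
  then show ?thesis using s unfolding B_def by simp
qed

theorem proposition4p1:
  fixes M :: "'a measure" and I :: "int \<Rightarrow> 'a \<Rightarrow> bool"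
    and Mn :: "nat \<Rightarrow> 'b measure" and In :: "nat \<Rightarrow> int \<Rightarrow> 'b \<Rightarrow> bool"
    and \<theta> :: real and \<pi> :: "nat \<Rightarrow> real"
  assumes M: "prob_space M"
    and I_rv: "\<And>t. I t \<in> measurable M (count_space UNIV)"
    and Mn: "\<And>n. prob_space (Mn n)"
    and stat: "\<And>n. stationary_proc (Mn n) (In n)"
    and pos: "\<And>n. measure (Mn n) {\<omega> \<in> space (Mn n). In n 0 \<omega>} > 0"
    and conv: "tail_fdd_conv Mn In M I"
    and theta_def: "\<theta> = measure M {\<omega> \<in> space M. cnt {t. t > 0 \<and> I t \<omega>} = 0}"
    and theta_pos: "\<theta> > 0"
    and pi_def: "\<And>k. \<pi> k =
        measure M {\<omega> \<in> space M. cnt {t. I t \<omega>} = enat k \<and> cnt {t. t < 0 \<and> I t \<omega>} = 0}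
        / measure M {\<omega> \<in> space M. cnt {t. t < 0 \<and> I t \<omega>} = 0}"
  shows "\<theta> = measure M {\<omega> \<in> space M. \<forall>t>0. \<not> I t \<omega>}
     \<and> \<theta> = measure M {\<omega> \<in> space M. \<forall>t<0. \<not> I t \<omega>}
     \<and> (\<forall>k::nat. measure M {\<omega> \<in> space M. cnt {t. t > 0 \<and> I t \<omega>} = enat k}
                = measure M {\<omega> \<in> space M. cnt {t. t < 0 \<and> I t \<omega>} = enat k})
     \<and> (\<forall>k::nat. k \<ge> 1 \<longrightarrow>
          \<pi> k = (1 / \<theta>) * (measure M {\<omega> \<in> space M. cnt {t. t > 0 \<and> I t \<omega>} = enat (k - 1)}
                          - measure M {\<omega> \<in> space M. cnt {t. t > 0 \<and> I t \<omega>} = enat k}))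
     \<and> (\<forall>l::nat.
          measure M {\<omega> \<in> space M. cnt {t. t > 0 \<and> I t \<omega>} = enat l}
            = \<theta> * (measure M {\<omega> \<in> space M. enat (l + 1) \<le> cnt {t. I t \<omega>} \<and> cnt {t. t < 0 \<and> I t \<omega>} = 0}
                   / measure M {\<omega> \<in> space M. cnt {t. t < 0 \<and> I t \<omega>} = 0})
        \<and> measure M {\<omega> \<in> space M. cnt {t. t > 0 \<and> I t \<omega>} = enat l}
            = \<theta> * (\<Sum>i. \<pi> (i + l + 1)))"
proof -
  interpret prob_space M by (rule M)
  have In_rv: "\<And>n t. In n t \<in> measurable (Mn n) (count_space UNIV)"
    using stat unfolding stationary_proc_def by blast
  have TC: "tc M I"
    by (rule tc_ext[OF M I_rv]) (rule tc_cyl[OF M I_rv Mn stat conv])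
  have TC': "tc M (\<lambda>t. I (- t))" by (rule tc_reflect[OF M I_rv TC])
  define A0 where "A0 = {\<omega>\<in>space M. I 0 \<omega>}"
  have A0s: "A0 \<in> sets M" unfolding A0_def by (rule pt_sets[OF I_rv])
  have A01: "measure M A0 = 1"
  proof -
    have l: "(\<lambda>n. measure (Mn n) (cyl (Mn n) (In n) {(0,{True})} \<inter> {\<omega>\<in>space (Mn n). In n 0 \<omega>})
        / measure (Mn n) {\<omega>\<in>space (Mn n). In n 0 \<omega>}) \<longlonglongrightarrow> measure M (cyl M I {(0,{True})})"
      by (rule conv_cyl[OF M I_rv Mn In_rv conv]) simp
    have e: "measure (Mn n) (cyl (Mn n) (In n) {(0,{True})} \<inter> {\<omega>\<in>space (Mn n). In n 0 \<omega>})
        / measure (Mn n) {\<omega>\<in>space (Mn n). In n 0 \<omega>} = 1" for n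
    proof -
      have "cyl (Mn n) (In n) {(0,{True})} \<inter> {\<omega>\<in>space (Mn n). In n 0 \<omega>} = {\<omega>\<in>space (Mn n). In n 0 \<omega>}"
        by (auto simp: cyl_def)
      then show ?thesis using pos[of n] by simp
    qed
    have "(\<lambda>n. 1) \<longlonglongrightarrow> measure M (cyl M I {(0,{True})})" using l unfolding e .
    then have "measure M (cyl M I {(0,{True})}) = 1" using LIMSEQ_unique tendsto_const by metis
    moreover have "cyl M I {(0,{True})} = A0" unfolding cyl_def A0_def by auto
    ultimately show ?thesis by simp
  qed
  have ase: "\<And>X. X \<in> sets M \<Longrightarrow> measure M X = measure M (X \<inter> A0)" by (rule as_I0[OF M A0s A01])
  have sc: "\<And>A B. {\<omega>\<in>space M. A \<omega>} \<in> sets M \<Longrightarrow> {\<omega>\<in>space M. B \<omega>} \<in> sets M \<Longrightarrow> {\<omega>\<in>space M. A \<omega> \<and> B \<omega>} \<in> sets M"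
  proof -
    fix A B assume "{\<omega>\<in>space M. A \<omega>} \<in> sets M" "{\<omega>\<in>space M. B \<omega>} \<in> sets M"
    then have "{\<omega>\<in>space M. A \<omega>} \<inter> {\<omega>\<in>space M. B \<omega>} \<in> sets M" by auto
    moreover have "{\<omega>\<in>space M. A \<omega>} \<inter> {\<omega>\<in>space M. B \<omega>} = {\<omega>\<in>space M. A \<omega> \<and> B \<omega>}" by auto
    ultimately show "{\<omega>\<in>space M. A \<omega> \<and> B \<omega>} \<in> sets M" by simp
  qed
  define Np where "Np \<omega> = cnt {t. t > 0 \<and> I t \<omega>}" for \<omega>
  define Nm where "Nm \<omega> = cnt {t. t < 0 \<and> I t \<omega>}" for \<omega>
  have Nps: "\<And>e. {\<omega>\<in>space M. Np \<omega> = e} \<in> sets M" unfolding Np_def by (rule cnt_eq_sets[OF I_rv])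
  have Nms: "\<And>e. {\<omega>\<in>space M. Nm \<omega> = e} \<in> sets M" unfolding Nm_def by (rule cnt_eq_sets[OF I_rv])
  have I0s: "{\<omega>\<in>space M. I 0 \<omega>} \<in> sets M" by (rule pt_sets[OF I_rv])
  define a where "a r q = measure M {\<omega>\<in>space M. I 0 \<omega> \<and> Nm \<omega> = r \<and> Np \<omega> = q}" for r q
  have anc: "a (enat r) q = a 0 (q + enat r)" for r q
    unfolding a_def Np_def Nm_def using anchor[OF M I_rv TC, of r q] by simp
  have anc': "a q (enat r) = a (q + enat r) 0" for r q
  proof -
    have hP: "measure M {\<omega>\<in>space M. I (- 0) \<omega> \<and> cnt {t. t < 0 \<and> I (- t) \<omega>} = enat r \<and> cnt {t. t > 0 \<and> I (- t) \<omega>} = q}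
       = measure M {\<omega>\<in>space M. I (- 0) \<omega> \<and> cnt {t. t < 0 \<and> I (- t) \<omega>} = 0 \<and> cnt {t. t > 0 \<and> I (- t) \<omega>} = q + enat r}"
      by (rule anchor[where I="\<lambda>t. I (- t)", OF M I_rv TC'])
    have "measure M {\<omega>\<in>space M. I 0 \<omega> \<and> Np \<omega> = enat r \<and> Nm \<omega> = q}
       = measure M {\<omega>\<in>space M. I 0 \<omega> \<and> Np \<omega> = 0 \<and> Nm \<omega> = q + enat r}"
    proof -
      have n1: "cnt {t. t < 0 \<and> I (- t) \<omega>} = cnt {t. 0 < t \<and> I t \<omega>}" for \<omega>
        using cnt_neg[of "\<lambda>t. t < 0" "\<lambda>t. I t \<omega>"] by simp
      have n2: "cnt {t. 0 < t \<and> I (- t) \<omega>} = cnt {t. t < 0 \<and> I t \<omega>}" for \<omega>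
        using cnt_neg[of "\<lambda>t. 0 < t" "\<lambda>t. I t \<omega>"] by simp
      show ?thesis using hP unfolding Np_def Nm_def by (simp add: n1 n2)
    qed
    moreover have "{\<omega>\<in>space M. I 0 \<omega> \<and> Np \<omega> = enat r \<and> Nm \<omega> = q} = {\<omega>\<in>space M. I 0 \<omega> \<and> Nm \<omega> = q \<and> Np \<omega> = enat r}" by auto
    moreover have "{\<omega>\<in>space M. I 0 \<omega> \<and> Np \<omega> = 0 \<and> Nm \<omega> = q + enat r} = {\<omega>\<in>space M. I 0 \<omega> \<and> Nm \<omega> = q + enat r \<and> Np \<omega> = 0}" by auto
    ultimately show ?thesis unfolding a_def by simp
  qed
  have ps: "\<And>Q g. {\<omega>\<in>space M. Q \<omega>} \<in> sets M \<Longrightarrow> (\<And>e. {\<omega>\<in>space M. g \<omega> = e} \<in> sets M) \<Longrightarrow>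
     (\<lambda>r. measure M {\<omega>\<in>space M. Q \<omega> \<and> g \<omega> = enat r}) sums
          (measure M {\<omega>\<in>space M. Q \<omega>} - measure M {\<omega>\<in>space M. Q \<omega> \<and> g \<omega> = \<infinity>})"
    by (rule part_sums[OF M])
  have ainf1: "a \<infinity> (enat k) = 0" for k
  proof -
    have c: "a \<infinity> (enat k) = a \<infinity> 0" for k using anc'[of \<infinity> k] by simp
    have "summable (\<lambda>k. measure M {\<omega>\<in>space M. (I 0 \<omega> \<and> Nm \<omega> = \<infinity>) \<and> Np \<omega> = enat k})"
      by (rule sums_summable, rule ps) (intro sc I0s Nms, rule Nps)
    then have "summable (\<lambda>k. a \<infinity> (enat k))" unfolding a_def by (simp add: conj_assoc)
    then have "summable (\<lambda>k::nat. a \<infinity> 0)" unfolding c .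
    then have "a \<infinity> 0 = 0" by (simp add: summable_const_iff)
    then show ?thesis using c by simp
  qed
  have ainf2: "a (enat r) \<infinity> = 0" for r
  proof -
    have c: "a (enat r) \<infinity> = a 0 \<infinity>" for r using anc[of r \<infinity>] by simp
    have "summable (\<lambda>r. measure M {\<omega>\<in>space M. (I 0 \<omega> \<and> Np \<omega> = \<infinity>) \<and> Nm \<omega> = enat r})"
      by (rule sums_summable, rule ps) (intro sc I0s Nps, rule Nms)
    moreover have "{\<omega>\<in>space M. (I 0 \<omega> \<and> Np \<omega> = \<infinity>) \<and> Nm \<omega> = enat r} = {\<omega>\<in>space M. I 0 \<omega> \<and> Nm \<omega> = enat r \<and> Np \<omega> = \<infinity>}" for r
      by auto
    ultimately have "summable (\<lambda>r. a (enat r) \<infinity>)" unfolding a_def by simp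
    then have "summable (\<lambda>r::nat. a 0 \<infinity>)" unfolding c .
    then have "a 0 \<infinity> = 0" by (simp add: summable_const_iff)
    then show ?thesis using c by simp
  qed
  define c where "c n = a 0 (enat n)" for n
  have afin: "a (enat r) (enat k) = c (k + r)" for r k unfolding c_def using anc[of r "enat k"] by simp
  have SP: "(\<lambda>r. c (k + r)) sums measure M {\<omega>\<in>space M. Np \<omega> = enat k}" for k
  proof -
    have "(\<lambda>r. measure M {\<omega>\<in>space M. (I 0 \<omega> \<and> Np \<omega> = enat k) \<and> Nm \<omega> = enat r}) sums
        (measure M {\<omega>\<in>space M. I 0 \<omega> \<and> Np \<omega> = enat k} - measure M {\<omega>\<in>space M. (I 0 \<omega> \<and> Np \<omega> = enat k) \<and> Nm \<omega> = \<infinity>})"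
      by (rule ps) (intro sc I0s Nps, rule Nms)
    moreover have "measure M {\<omega>\<in>space M. (I 0 \<omega> \<and> Np \<omega> = enat k) \<and> Nm \<omega> = enat r} = c (k + r)" for r
    proof -
      have "{\<omega>\<in>space M. (I 0 \<omega> \<and> Np \<omega> = enat k) \<and> Nm \<omega> = enat r} = {\<omega>\<in>space M. I 0 \<omega> \<and> Nm \<omega> = enat r \<and> Np \<omega> = enat k}" by auto
      then show ?thesis using afin[of r k] unfolding a_def by simp
    qed
    moreover have "measure M {\<omega>\<in>space M. (I 0 \<omega> \<and> Np \<omega> = enat k) \<and> Nm \<omega> = \<infinity>} = 0"
    proof -
      have "{\<omega>\<in>space M. (I 0 \<omega> \<and> Np \<omega> = enat k) \<and> Nm \<omega> = \<infinity>} = {\<omega>\<in>space M. I 0 \<omega> \<and> Nm \<omega> = \<infinity> \<and> Np \<omega> = enat k}" by auto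
      then show ?thesis using ainf1[of k] unfolding a_def by simp
    qed
    moreover have "measure M {\<omega>\<in>space M. Np \<omega> = enat k} = measure M {\<omega>\<in>space M. I 0 \<omega> \<and> Np \<omega> = enat k}"
    proof -
      have "measure M {\<omega>\<in>space M. Np \<omega> = enat k} = measure M ({\<omega>\<in>space M. Np \<omega> = enat k} \<inter> A0)" by (rule ase[OF Nps])
      moreover have "{\<omega>\<in>space M. Np \<omega> = enat k} \<inter> A0 = {\<omega>\<in>space M. I 0 \<omega> \<and> Np \<omega> = enat k}" unfolding A0_def by auto
      ultimately show ?thesis by simp
    qed
    ultimately show ?thesis by simp
  qed
  have SM: "(\<lambda>r. c (k + r)) sums measure M {\<omega>\<in>space M. Nm \<omega> = enat k}" for k
  proof -
    have "(\<lambda>r. measure M {\<omega>\<in>space M. (I 0 \<omega> \<and> Nm \<omega> = enat k) \<and> Np \<omega> = enat r}) sums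
        (measure M {\<omega>\<in>space M. I 0 \<omega> \<and> Nm \<omega> = enat k} - measure M {\<omega>\<in>space M. (I 0 \<omega> \<and> Nm \<omega> = enat k) \<and> Np \<omega> = \<infinity>})"
      by (rule ps) (intro sc I0s Nms, rule Nps)
    moreover have "measure M {\<omega>\<in>space M. (I 0 \<omega> \<and> Nm \<omega> = enat k) \<and> Np \<omega> = enat r} = c (k + r)" for r
    proof -
      have "{\<omega>\<in>space M. (I 0 \<omega> \<and> Nm \<omega> = enat k) \<and> Np \<omega> = enat r} = {\<omega>\<in>space M. I 0 \<omega> \<and> Nm \<omega> = enat k \<and> Np \<omega> = enat r}" by auto
      then show ?thesis using afin[of k r] unfolding a_def by (simp add: add.commute)
    qed
    moreover have "measure M {\<omega>\<in>space M. (I 0 \<omega> \<and> Nm \<omega> = enat k) \<and> Np \<omega> = \<infinity>} = 0"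
    proof -
      have "{\<omega>\<in>space M. (I 0 \<omega> \<and> Nm \<omega> = enat k) \<and> Np \<omega> = \<infinity>} = {\<omega>\<in>space M. I 0 \<omega> \<and> Nm \<omega> = enat k \<and> Np \<omega> = \<infinity>}" by auto
      then show ?thesis using ainf2[of k] unfolding a_def by simp
    qed
    moreover have "measure M {\<omega>\<in>space M. Nm \<omega> = enat k} = measure M {\<omega>\<in>space M. I 0 \<omega> \<and> Nm \<omega> = enat k}"
    proof -
      have "measure M {\<omega>\<in>space M. Nm \<omega> = enat k} = measure M ({\<omega>\<in>space M. Nm \<omega> = enat k} \<inter> A0)" by (rule ase[OF Nms])
      moreover have "{\<omega>\<in>space M. Nm \<omega> = enat k} \<inter> A0 = {\<omega>\<in>space M. I 0 \<omega> \<and> Nm \<omega> = enat k}" unfolding A0_def by auto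
      ultimately show ?thesis by simp
    qed
    ultimately show ?thesis by simp
  qed
  have G3: "measure M {\<omega>\<in>space M. Np \<omega> = enat k} = measure M {\<omega>\<in>space M. Nm \<omega> = enat k}" for k
    using sums_unique2[OF SP SM] .
  have th: "\<theta> = measure M {\<omega>\<in>space M. Np \<omega> = enat 0}" unfolding theta_def Np_def by (simp add: enat_0)
  have G1: "\<theta> = measure M {\<omega> \<in> space M. \<forall>t>0. \<not> I t \<omega>}"
    unfolding theta_def by (simp add: cnt_zero_iff)
  have thM: "\<theta> = measure M {\<omega>\<in>space M. Nm \<omega> = 0}" using th G3[of 0] by (simp add: enat_0)
  have G2: "\<theta> = measure M {\<omega> \<in> space M. \<forall>t<0. \<not> I t \<omega>}"
    using thM unfolding Nm_def by (simp add: cnt_zero_iff)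
  have cntJ: "cnt {t. I t \<omega>} = Nm \<omega> + (Np \<omega> + 1)" if "I 0 \<omega>" for \<omega>
  proof -
    have "cnt {t. I t \<omega>} = cnt {t. t < 0 \<and> I t \<omega>} + cnt (insert 0 {t. t > 0 \<and> I t \<omega>})"
      using that by (intro cnt_split) auto
    then show ?thesis unfolding Np_def Nm_def by (simp add: cnt_insert)
  qed
  have Js: "\<And>e. {\<omega>\<in>space M. cnt {t. I t \<omega>} = e} \<in> sets M"
    using cnt_eq_sets[OF I_rv, of "\<lambda>_. True"] by simp
  have plus1: "\<And>x k. 1 \<le> k \<Longrightarrow> (x + 1 = enat k) = (x = enat (k - 1))"
    subgoal for x k by (cases x) (auto simp: one_enat_def)
    done
  have pik: "\<pi> k = c (k - 1) / \<theta>" if k: "1 \<le> k" for k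
  proof -
    have "measure M {\<omega>\<in>space M. cnt {t. I t \<omega>} = enat k \<and> Nm \<omega> = 0}
        = measure M ({\<omega>\<in>space M. cnt {t. I t \<omega>} = enat k \<and> Nm \<omega> = 0} \<inter> A0)"
      by (rule ase) (intro sc Js Nms)
    also have "{\<omega>\<in>space M. cnt {t. I t \<omega>} = enat k \<and> Nm \<omega> = 0} \<inter> A0
        = {\<omega>\<in>space M. I 0 \<omega> \<and> Nm \<omega> = 0 \<and> Np \<omega> = enat (k - 1)}"
      unfolding A0_def using cntJ plus1[OF k] by auto
    also have "measure M \<dots> = c (k - 1)" unfolding c_def a_def by (simp add: enat_0)
    finally have "measure M {\<omega>\<in>space M. cnt {t. I t \<omega>} = enat k \<and> Nm \<omega> = 0} = c (k - 1)" .
    then show ?thesis using pi_def[of k] thM unfolding Nm_def by simp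
  qed
  have G4: "measure M {\<omega>\<in>space M. Np \<omega> = enat k} = measure M {\<omega>\<in>space M. Np \<omega> = enat (k - 1)} - c (k - 1)"
    if k: "1 \<le> k" for k
  proof -
    have "(\<lambda>n. c (k - 1 + Suc n)) sums (measure M {\<omega>\<in>space M. Np \<omega> = enat (k - 1)} - c (k - 1))"
      using SP[of "k - 1"] by (subst sums_Suc_iff) simp
    moreover have "c (k - 1 + Suc n) = c (k + n)" for n using k by simp
    ultimately have "(\<lambda>n. c (k + n)) sums (measure M {\<omega>\<in>space M. Np \<omega> = enat (k - 1)} - c (k - 1))" by simp
    then show ?thesis using sums_unique2[OF SP[of k]] by simp
  qed
  have G5: "(\<lambda>i. c (i + l)) sums measure M {\<omega>\<in>space M. enat (l + 1) \<le> cnt {t. I t \<omega>} \<and> Nm \<omega> = 0}" for l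
  proof -
    have Ls: "{\<omega>\<in>space M. enat (l + 1) \<le> cnt {t. I t \<omega>}} \<in> sets M"
    proof -
      have "(\<lambda>\<omega>. cnt {t. True \<and> I t \<omega>}) -` {x. enat (l + 1) \<le> x} \<inter> space M \<in> sets M"
        using cnt_measurable[OF I_rv, of "\<lambda>_. True"] by (rule measurable_sets) simp
      moreover have "(\<lambda>\<omega>. cnt {t. True \<and> I t \<omega>}) -` {x. enat (l + 1) \<le> x} \<inter> space M = {\<omega>\<in>space M. enat (l + 1) \<le> cnt {t. I t \<omega>}}" by auto
      ultimately show ?thesis by simp
    qed
    have Lps: "{\<omega>\<in>space M. enat l \<le> Np \<omega>} \<in> sets M"
    proof -
      have "(\<lambda>\<omega>. cnt {t. t > 0 \<and> I t \<omega>}) -` {x. enat l \<le> x} \<inter> space M \<in> sets M"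
        using cnt_measurable[OF I_rv, of "\<lambda>t. t > 0"] by (rule measurable_sets) simp
      moreover have "(\<lambda>\<omega>. cnt {t. t > 0 \<and> I t \<omega>}) -` {x. enat l \<le> x} \<inter> space M = {\<omega>\<in>space M. enat l \<le> Np \<omega>}" unfolding Np_def by auto
      ultimately show ?thesis by simp
    qed
    have e1: "enat (l + 1) \<le> x + 1 \<longleftrightarrow> enat l \<le> x" for x by (cases x) (auto simp: one_enat_def)
    have "measure M {\<omega>\<in>space M. enat (l + 1) \<le> cnt {t. I t \<omega>} \<and> Nm \<omega> = 0}
        = measure M ({\<omega>\<in>space M. enat (l + 1) \<le> cnt {t. I t \<omega>} \<and> Nm \<omega> = 0} \<inter> A0)"
      by (rule ase) (intro sc Ls Nms)
    also have "{\<omega>\<in>space M. enat (l + 1) \<le> cnt {t. I t \<omega>} \<and> Nm \<omega> = 0} \<inter> A0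
        = {\<omega>\<in>space M. (I 0 \<omega> \<and> Nm \<omega> = 0 \<and> enat l \<le> Np \<omega>)}"
      unfolding A0_def using cntJ e1 by auto
    finally have N: "measure M {\<omega>\<in>space M. enat (l + 1) \<le> cnt {t. I t \<omega>} \<and> Nm \<omega> = 0}
        = measure M {\<omega>\<in>space M. (I 0 \<omega> \<and> Nm \<omega> = 0 \<and> enat l \<le> Np \<omega>)}" .
    have "(\<lambda>r. measure M {\<omega>\<in>space M. (I 0 \<omega> \<and> Nm \<omega> = 0 \<and> enat l \<le> Np \<omega>) \<and> Np \<omega> = enat r}) sums
        (measure M {\<omega>\<in>space M. (I 0 \<omega> \<and> Nm \<omega> = 0 \<and> enat l \<le> Np \<omega>)}
          - measure M {\<omega>\<in>space M. (I 0 \<omega> \<and> Nm \<omega> = 0 \<and> enat l \<le> Np \<omega>) \<and> Np \<omega> = \<infinity>})"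
      by (rule ps) (intro sc I0s Nms Lps, rule Nps)
    moreover have "measure M {\<omega>\<in>space M. (I 0 \<omega> \<and> Nm \<omega> = 0 \<and> enat l \<le> Np \<omega>) \<and> Np \<omega> = enat r}
        = (if l \<le> r then c r else 0)" for r
    proof (cases "l \<le> r")
      case True
      then have "{\<omega>\<in>space M. (I 0 \<omega> \<and> Nm \<omega> = 0 \<and> enat l \<le> Np \<omega>) \<and> Np \<omega> = enat r}
          = {\<omega>\<in>space M. I 0 \<omega> \<and> Nm \<omega> = 0 \<and> Np \<omega> = enat r}" by auto
      then show ?thesis using True unfolding c_def a_def by simp
    next
      case False
      then have em: "{\<omega>\<in>space M. (I 0 \<omega> \<and> Nm \<omega> = 0 \<and> enat l \<le> Np \<omega>) \<and> Np \<omega> = enat r} = {}" by auto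
      show ?thesis unfolding em using False by simp
    qed
    moreover have "measure M {\<omega>\<in>space M. (I 0 \<omega> \<and> Nm \<omega> = 0 \<and> enat l \<le> Np \<omega>) \<and> Np \<omega> = \<infinity>} = 0"
    proof -
      have "{\<omega>\<in>space M. (I 0 \<omega> \<and> Nm \<omega> = 0 \<and> enat l \<le> Np \<omega>) \<and> Np \<omega> = \<infinity>}
          = {\<omega>\<in>space M. I 0 \<omega> \<and> Nm \<omega> = enat 0 \<and> Np \<omega> = \<infinity>}" by (auto simp: enat_0)
      then show ?thesis using ainf2[of 0] unfolding a_def by simp
    qed
    ultimately have "(\<lambda>r. if l \<le> r then c r else 0) sums
        measure M {\<omega>\<in>space M. enat (l + 1) \<le> cnt {t. I t \<omega>} \<and> Nm \<omega> = 0}" unfolding N by simp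
    then have "(\<lambda>i. if l \<le> i + l then c (i + l) else 0) sums
        measure M {\<omega>\<in>space M. enat (l + 1) \<le> cnt {t. I t \<omega>} \<and> Nm \<omega> = 0}"
      by (subst sums_iff_shift[where n=l]) simp
    then show ?thesis by simp
  qed
  have thpos: "\<theta> \<noteq> 0" using theta_pos by simp
  show ?thesis
  proof (intro conjI allI impI)
    show "\<theta> = measure M {\<omega> \<in> space M. \<forall>t>0. \<not> I t \<omega>}" by (rule G1)
    show "\<theta> = measure M {\<omega> \<in> space M. \<forall>t<0. \<not> I t \<omega>}" by (rule G2)
    show "measure M {\<omega> \<in> space M. cnt {t. t > 0 \<and> I t \<omega>} = enat k}
        = measure M {\<omega> \<in> space M. cnt {t. t < 0 \<and> I t \<omega>} = enat k}" for k
      using G3[of k] unfolding Np_def Nm_def .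
    show "\<pi> k = (1 / \<theta>) * (measure M {\<omega> \<in> space M. cnt {t. t > 0 \<and> I t \<omega>} = enat (k - 1)}
                          - measure M {\<omega> \<in> space M. cnt {t. t > 0 \<and> I t \<omega>} = enat k})" if k: "1 \<le> k" for k
      using pik[OF k] G4[OF k] unfolding Np_def by simp
    fix l :: nat
    have E: "measure M {\<omega>\<in>space M. cnt {t. t > 0 \<and> I t \<omega>} = enat l}
        = measure M {\<omega>\<in>space M. enat (l + 1) \<le> cnt {t. I t \<omega>} \<and> cnt {t. t < 0 \<and> I t \<omega>} = 0}"
    proof -
      have fe: "(\<lambda>r. c (l + r)) = (\<lambda>i. c (i + l))" by (simp add: add.commute)
      show ?thesis using sums_unique2[OF SP[of l, unfolded fe] G5[of l]] unfolding Np_def Nm_def .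
    qed
    show "measure M {\<omega>\<in>space M. cnt {t. t > 0 \<and> I t \<omega>} = enat l}
        = \<theta> * (measure M {\<omega>\<in>space M. enat (l + 1) \<le> cnt {t. I t \<omega>} \<and> cnt {t. t < 0 \<and> I t \<omega>} = 0}
               / measure M {\<omega>\<in>space M. cnt {t. t < 0 \<and> I t \<omega>} = 0})"
      using E thM thpos unfolding Nm_def by simp
    have "(\<lambda>i. \<pi> (i + l + 1)) sums (measure M {\<omega>\<in>space M. cnt {t. t > 0 \<and> I t \<omega>} = enat l} / \<theta>)"
    proof -
      have "\<pi> (i + l + 1) = c (i + l) / \<theta>" for i using pik[of "i + l + 1"] by simp
      moreover have "(\<lambda>i. c (i + l) / \<theta>) sums (measure M {\<omega>\<in>space M. cnt {t. t > 0 \<and> I t \<omega>} = enat l} / \<theta>)"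
      proof -
        have fe: "(\<lambda>r. c (l + r)) = (\<lambda>i. c (i + l))" by (simp add: add.commute)
        show ?thesis using sums_divide[OF SP[of l, unfolded fe]] unfolding Np_def .
      qed
      ultimately show ?thesis by simp
    qed
    then show "measure M {\<omega>\<in>space M. cnt {t. t > 0 \<and> I t \<omega>} = enat l} = \<theta> * (\<Sum>i. \<pi> (i + l + 1))"
      using thpos by (simp add: sums_iff)
  qed
qed

end
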